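(* Let $\mathcal{G}$ be a simple undirected graph on $N$ vertices with no isolated vertices, with adjacency matrix $\mathbf{A}\in\{0,1\}^{N\times N}$ and degree matrix $\mathbf{D}=\operatorname{diag}(\mathbf{A}\mathbf{1})$. Let $\lambda$ be an eigenvalue of $$\mathbf{L}=\mathbf{D}^{-1/2}\mathbf{A}\mathbf{D}^{-1/2}-\operatorname{diag}\big(\mathbf{D}^{-1/2}\mathbf{A}\mathbf{D}^{-1/2}\mathbf{1}\big).$$ Then $|\lambda|\le 2\sqrt{N}$.
   Context: For a vector $\mathbf{w}$, $\operatorname{diag}(\mathbf{w})$ is the diagonal matrix with diagonal $\mathbf{w}$; $\mathbf{1}$ is the all-ones vector. *)

theory Defs
  imports "HOL-Analysis.Analysis"
begin

text \<open>Simple undirected graph given by its adjacency matrix on vertex type 'n (N = CARD('n)).\<close>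
definition simple_adj :: "real^'n^'n \<Rightarrow> bool" where
  "simple_adj A \<longleftrightarrow> (\<forall>i j. A$i$j \<in> {0,1}) \<and> (\<forall>i j. A$i$j = A$j$i) \<and> (\<forall>i. A$i$i = 0)"

definition no_isolated :: "real^'n^'n \<Rightarrow> bool" where
  "no_isolated A \<longleftrightarrow> (\<forall>i. \<exists>j. A$i$j = 1)"

definition diag_mat :: "real^'n \<Rightarrow> real^'n^'n" where
  "diag_mat w = (\<chi> i j. if i = j then w$i else 0)"

definition degree_mat :: "real^'n^'n \<Rightarrow> real^'n^'n" where
  "degree_mat A = diag_mat (A *v (\<chi> i. 1))"

definition inv_sqrt_diag :: "real^'n^'n \<Rightarrow> real^'n^'n" where
  "inv_sqrt_diag D = diag_mat (\<chi> i. 1 / sqrt (D$i$i))"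

definition normalized_adj :: "real^'n^'n \<Rightarrow> real^'n^'n" where
  "normalized_adj A = inv_sqrt_diag (degree_mat A) ** A ** inv_sqrt_diag (degree_mat A)"

definition L_mat :: "real^'n^'n \<Rightarrow> real^'n^'n" where
  "L_mat A = normalized_adj A - diag_mat (normalized_adj A *v (\<chi> i. 1))"

definition is_eigenvalue :: "real^'n^'n \<Rightarrow> complex \<Rightarrow> bool" where
  "is_eigenvalue M l \<longleftrightarrow> (\<exists>v :: complex^'n. v \<noteq> 0 \<and>
      (\<chi> i. \<Sum>j\<in>UNIV. complex_of_real (M$i$j) * v$j) = l *s v)"

end

theory Submission
  imports Defs
begin

lemma gersh:
  fixes M :: "real^'n^'n" and l :: complex and B :: real
  assumes "is_eigenvalue M l" and "\<And>i. (\<Sum>j\<in>UNIV. \<bar>M$i$j\<bar>) \<le> B"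
  shows "cmod l \<le> B"
proof -
  obtain v :: "complex^'n" where v0: "v \<noteq> 0"
    and ev: "(\<chi> i. \<Sum>j\<in>UNIV. complex_of_real (M$i$j) * v$j) = l *s v"
    using assms(1) unfolding is_eigenvalue_def by blast
  obtain i where imax: "\<And>j. cmod (v$j) \<le> cmod (v$i)"
  proof -
    let ?f = "\<lambda>j. cmod (v$j)"
    have "Max (range ?f) \<in> range ?f" by (rule Max_in) auto
    then obtain i where "?f i = Max (range ?f)" by (metis (no_types, lifting) imageE)
    moreover have "\<And>j. ?f j \<le> Max (range ?f)" by (rule Max_ge) auto
    ultimately show ?thesis using that by metis
  qed
  have "v$i \<noteq> 0"
  proof
    assume "v$i = 0"
    then have "\<And>j. cmod (v$j) \<le> 0" using imax by (metis norm_zero)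
    then have "\<And>j. v$j = 0" by simp
    then show False using v0 by (simp add: vec_eq_iff)
  qed
  then have pos: "cmod (v$i) > 0" by simp
  have "l * v$i = (\<Sum>j\<in>UNIV. complex_of_real (M$i$j) * v$j)"
    using arg_cong[OF ev, of "\<lambda>w. w$i"] by simp
  then have "cmod l * cmod (v$i) = cmod (\<Sum>j\<in>UNIV. complex_of_real (M$i$j) * v$j)"
    by (metis norm_mult)
  also have "\<dots> \<le> (\<Sum>j\<in>UNIV. cmod (complex_of_real (M$i$j) * v$j))"
    by (rule norm_sum)
  also have "\<dots> \<le> (\<Sum>j\<in>UNIV. \<bar>M$i$j\<bar> * cmod (v$i))"
    by (rule sum_mono) (simp add: norm_mult imax mult_left_mono)
  also have "\<dots> = (\<Sum>j\<in>UNIV. \<bar>M$i$j\<bar>) * cmod (v$i)"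
    by (simp add: sum_distrib_right)
  also have "\<dots> \<le> B * cmod (v$i)"
    using assms(2) pos by (simp add: mult_right_mono)
  finally show ?thesis using pos by simp
qed

theorem proposition8:
  fixes A :: "real^'n^'n" and l :: complex
  assumes "simple_adj A"
    and "no_isolated A"
    and "is_eigenvalue (L_mat A) l"
  shows "cmod l \<le> 2 * sqrt (real CARD('n))"
proof (rule gersh[OF assms(3)])
  fix i
  define d where "d = (\<lambda>i. \<Sum>j\<in>UNIV. A$i$j)"
  define n where "n = (\<lambda>i j. A$i$j / (sqrt (d i) * sqrt (d j)))"
  have A01: "\<And>i j. A$i$j = 0 \<or> A$i$j = 1" and Asym: "\<And>i j. A$i$j = A$j$i"
    using assms(1) unfolding simple_adj_def by auto
  have dm: "\<And>i j. degree_mat A $ i $ j = (if i = j then d i else 0)"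
    by (simp add: degree_mat_def diag_mat_def d_def matrix_vector_mult_def)
  have S: "\<And>i j. inv_sqrt_diag (degree_mat A) $ i $ j = (if i = j then 1 / sqrt (d i) else 0)"
    by (simp add: inv_sqrt_diag_def diag_mat_def dm)
  have N: "\<And>i j. normalized_adj A $ i $ j = n i j"
  proof -
    have e1: "\<And>i k (a::real) b. (if i = k then a else 0) * b = (if i = k then a * b else 0)" by simp
    have e2: "\<And>i k (a::real) b. b * (if k = i then a else 0) = (if k = i then b * a else 0)" by simp
    have SA: "\<And>i k. (inv_sqrt_diag (degree_mat A) ** A) $ i $ k = A$i$k / sqrt (d i)"
      unfolding matrix_matrix_mult_def S by (simp add: e1)
    show "\<And>i j. normalized_adj A $ i $ j = n i j"
      unfolding normalized_adj_def
      unfolding matrix_matrix_mult_def[of "inv_sqrt_diag (degree_mat A) ** A"]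
      by (simp add: SA S e2 n_def)
  qed
  have L: "\<And>j. L_mat A $ i $ j = n i j - (if i = j then (\<Sum>k\<in>UNIV. n i k) else 0)"
    by (simp add: L_mat_def diag_mat_def N matrix_vector_mult_def)
  have npos: "\<And>j. n i j \<ge> 0" unfolding n_def d_def
    using A01 by (metis divide_nonneg_nonneg mult_nonneg_nonneg order_refl real_sqrt_ge_zero
        sum_nonneg zero_le_one)
  have "(\<Sum>j\<in>UNIV. \<bar>L_mat A $ i $ j\<bar>) \<le> (\<Sum>j\<in>UNIV. n i j + (if i = j then (\<Sum>k\<in>UNIV. n i k) else 0))"
    unfolding L
  proof (rule sum_mono)
    fix j
    have "0 \<le> sum (n i) UNIV" using npos by (simp add: sum_nonneg)
    then show "\<bar>n i j - (if i = j then sum (n i) UNIV else 0)\<bar> \<le> n i j + (if i = j then sum (n i) UNIV else 0)"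
      using npos[of j] by auto
  qed
  also have "\<dots> = 2 * (\<Sum>k\<in>UNIV. n i k)"
    by (simp add: sum.distrib)
  also have "(\<Sum>k\<in>UNIV. n i k) \<le> (\<Sum>k\<in>UNIV. A$i$k / sqrt (d i))"
  proof (rule sum_mono)
    fix k
    show "n i k \<le> A$i$k / sqrt (d i)"
    proof (cases "A$i$k = 0")
      case True then show ?thesis by (simp add: n_def)
    next
      case False
      then have a1: "A$i$k = 1" using A01 by metis
      have "d k \<ge> A$k$i" unfolding d_def
        proof (rule member_le_sum)
        fix x show "0 \<le> A$k$x" using A01[of k x] by auto
      qed auto
      then have "d k \<ge> 1" using a1 Asym by metis
      then have "sqrt (d k) \<ge> 1" by simp
      moreover have "d i \<ge> 0" unfolding d_def using A01 by (intro sum_nonneg) (metis order_refl zero_le_one)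
      ultimately show ?thesis unfolding n_def a1
        by (cases "d i = 0") (auto simp: field_simps)
    qed
  qed
  also have "\<dots> = d i / sqrt (d i)" by (simp add: d_def sum_divide_distrib)
  also have "\<dots> = sqrt (d i)"
  proof -
    have "d i \<ge> 0" unfolding d_def using A01 by (intro sum_nonneg) (metis order_refl zero_le_one)
    then show ?thesis by (rule real_div_sqrt)
  qed
  also have "\<dots> \<le> sqrt (real CARD('n))"
  proof -
    have "d i \<le> (\<Sum>j\<in>(UNIV::'n set). (1::real))" unfolding d_def
      proof (rule sum_mono)
        fix x show "A$i$x \<le> 1" using A01[of i x] by auto
      qed
    then show ?thesis by simp
  qed
  finally show "(\<Sum>j\<in>UNIV. \<bar>L_mat A $ i $ j\<bar>) \<le> 2 * sqrt (real CARD('n))" by simp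
qed

end
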